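(* Let $A\in\mathbb{R}^{2\times2}$ be diagonalizable (over $\mathbb{C}$) and let $p\in\{1,\infty\}$. Then there exists an invertible $W\in\mathbb{R}^{2\times 2}$ such that the linear vector field $x\mapsto Ax$ is WIC with respect to the weighted norm $x\mapsto\|Wx\|_p$ (equivalently, $\mu_p(WAW^{-1})\le 0$) if and only if every eigenvalue of $A$ lies in the cone $\{\alpha+\beta i:\ \alpha\le 0,\ |\beta|\le-\alpha\}$.
   Context: For $x\in\mathbb{R}^2$, $\|x\|_1=|x_1|+|x_2|$ and $\|x\|_\infty=\max(|x_1|,|x_2|)$. The matrix measure of $B\in\mathbb{R}^{2\times2}$ is $\mu_p(B)=\lim_{h\to0^+}\frac{\|I+hB\|_p-1}{h}$ (induced matrix norm); explicitly $\mu_1(B)=\max_j\big(b_{jj}+\sum_{i\ne j}|b_{ij}|\big)$ and $\mu_\infty(B)=\max_i\big(b_{ii}+\sum_{j\ne i}|b_{ij}|\big)$. A vector field $f$ is weakly infinitesimally contracting (WIC) with respect to a norm if $\sup_x \mu(Df(x))\le 0$ for the matrix measure $\mu$ associated to that norm; for the weighted norm $\|Wx\|_p$ and $f(x)=Ax$ this means $\mu_p(WAW^{-1})\le 0$. *)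

theory Defs
  imports "HOL-Analysis.Analysis"
begin

datatype pnorm = P1 | PInf

text \<open>Matrix measure induced by the 1-norm: max over columns j of
  b_jj + sum over i different from j of abs b_ij.\<close>
definition mu1 :: "real^2^2 \<Rightarrow> real" where
  "mu1 B = Max ((\<lambda>j. B$j$j + (\<Sum>i\<in>UNIV - {j}. \<bar>B$i$j\<bar>)) ` UNIV)"

text \<open>Matrix measure induced by the infinity-norm: max over rows i of
  b_ii + sum over j different from i of abs b_ij.\<close>
definition muinf :: "real^2^2 \<Rightarrow> real" where
  "muinf B = Max ((\<lambda>i. B$i$i + (\<Sum>j\<in>UNIV - {i}. \<bar>B$i$j\<bar>)) ` UNIV)"

definition mu :: "pnorm \<Rightarrow> real^2^2 \<Rightarrow> real" where
  "mu p B = (case p of P1 \<Rightarrow> mu1 B | PInf \<Rightarrow> muinf B)"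

definition cmat :: "real^'n^'m \<Rightarrow> complex^'n^'m" where
  "cmat A = (\<chi> i j. complex_of_real (A$i$j))"

definition diagonalizable_C :: "real^'n^'n \<Rightarrow> bool" where
  "diagonalizable_C A \<longleftrightarrow> (\<exists>P :: complex^'n^'n. invertible P \<and>
      (\<forall>i j. i \<noteq> j \<longrightarrow> (matrix_inv P ** cmat A ** P)$i$j = 0))"

definition is_eigenvalue_C :: "real^'n^'n \<Rightarrow> complex \<Rightarrow> bool" where
  "is_eigenvalue_C A l \<longleftrightarrow> (\<exists>v :: complex^'n. v \<noteq> 0 \<and> cmat A *v v = l *s v)"

definition in_cone :: "complex \<Rightarrow> bool" where
  "in_cone z \<longleftrightarrow> Re z \<le> 0 \<and> \<bar>Im z\<bar> \<le> - Re z"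

end

theory Submission
  imports Defs
begin


lemma inv_lr:
  fixes A :: "'a::field^'n^'n"
  assumes "invertible A"
  shows "A ** matrix_inv A = mat 1 \<and> matrix_inv A ** A = mat 1"
  using assms unfolding invertible_def matrix_inv_def by (rule someI_ex)

lemma inv_unique:
  fixes A :: "'a::field^'n^'n"
  assumes "A ** B = mat 1" "B ** A = mat 1"
  shows "matrix_inv A = B"
proof -
  have i: "invertible A" using assms invertible_def by blast
  have "matrix_inv A = matrix_inv A ** (A ** B)" using assms by simp
  also have "\<dots> = (matrix_inv A ** A) ** B" by (simp add: matrix_mul_assoc)
  also have "\<dots> = B" using inv_lr[OF i] by simp
  finally show ?thesis .
qed

lemma mu1_2: "mu1 B = max (B$1$1 + \<bar>B$2$1\<bar>) (B$2$2 + \<bar>B$1$2\<bar>)"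
proof -
  have a: "{1,2} - {1::2} = {2}" "{1,2} - {2::2} = {1}" by auto
  show ?thesis unfolding mu1_def UNIV_2 by (simp add: a)
qed

lemma muinf_2: "muinf B = max (B$1$1 + \<bar>B$1$2\<bar>) (B$2$2 + \<bar>B$2$1\<bar>)"
proof -
  have a: "{1,2} - {1::2} = {2}" "{1,2} - {2::2} = {1}" by auto
  show ?thesis unfolding muinf_def UNIV_2 by (simp add: a)
qed

lemma sim_exists:
  fixes A P J :: "real^2^2"
  assumes "invertible P" "A ** P = P ** J" "mu p J \<le> 0"
  shows "\<exists>W :: real^2^2. invertible W \<and> mu p (W ** A ** matrix_inv W) \<le> 0"
proof (intro exI conjI)
  let ?W = "matrix_inv P"
  have l: "P ** ?W = mat 1" "?W ** P = mat 1" using inv_lr[OF assms(1)] by auto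
  show "invertible ?W" using l invertible_def by blast
  have "matrix_inv ?W = P" using inv_unique[OF l(2) l(1)] .
  moreover have "?W ** A ** P = J"
    by (metis assms(2) l(2) matrix_mul_assoc matrix_mul_lid)
  ultimately show "mu p (?W ** A ** matrix_inv ?W) \<le> 0" using assms(3) by simp
qed

lemma trace_sim:
  fixes A W :: "'a::field^'n^'n"
  assumes "invertible W"
  shows "trace (W ** A ** matrix_inv W) = trace A" "det (W ** A ** matrix_inv W) = det A"
proof -
  have l: "W ** matrix_inv W = mat 1" "matrix_inv W ** W = mat 1" using inv_lr[OF assms] by auto
  have "trace (W ** A ** matrix_inv W) = trace (matrix_inv W ** (W ** A))" by (rule trace_mul_sym)
  also have "\<dots> = trace A" by (metis matrix_mul_assoc l matrix_mul_lid)
  finally show "trace (W ** A ** matrix_inv W) = trace A" .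
  have "det (W ** A ** matrix_inv W) = det A * det (W ** matrix_inv W)"
    by (simp add: det_mul)
  then show "det (W ** A ** matrix_inv W) = det A" by (simp add: l det_I)
qed

lemma trace_2: "trace (B::'a::semiring_1^2^2) = B$1$1 + B$2$2"
  unfolding trace_def sum_2 ..


lemma cmat_mv:
  fixes A :: "real^2^2" and v :: "complex^2"
  shows "(cmat A *v v)$1 = of_real (A$1$1) * v$1 + of_real (A$1$2) * v$2"
        "(cmat A *v v)$2 = of_real (A$2$1) * v$1 + of_real (A$2$2) * v$2"
  by (simp_all add: cmat_def matrix_vector_mult_def sum_2)

lemma rmat_mv:
  fixes A :: "real^2^2" and v :: "real^2"
  shows "(A *v v)$1 = A$1$1 * v$1 + A$1$2 * v$2"
        "(A *v v)$2 = A$2$1 * v$1 + A$2$2 * v$2"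
  by (simp_all add: matrix_vector_mult_def sum_2)

lemma vec2_eq: "(u::'a^2) = v \<longleftrightarrow> u$1 = v$1 \<and> u$2 = v$2"
  by (simp add: vec_eq_iff forall_2)

lemma eig_char:
  fixes A :: "real^2^2"
  assumes "is_eigenvalue_C A l"
  shows "l^2 - of_real (trace A) * l + of_real (det A) = 0"
proof -
  obtain v where v: "v \<noteq> 0" "cmat A *v v = l *s v" using assms is_eigenvalue_C_def by blast
  let ?a = "complex_of_real (A$1$1)" and ?b = "complex_of_real (A$1$2)"
  let ?c = "complex_of_real (A$2$1)" and ?d = "complex_of_real (A$2$2)"
  have e1: "?a * v$1 + ?b * v$2 = l * v$1" using v(2) cmat_mv(1)[of A v] by (metis vector_scalar_mult_def vec_lambda_beta)
  have e2: "?c * v$1 + ?d * v$2 = l * v$2" using v(2) cmat_mv(2)[of A v] by (metis vector_scalar_mult_def vec_lambda_beta)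
  have q: "l^2 - of_real (trace A) * l + of_real (det A) = (?a - l) * (?d - l) - ?b * ?c"
    by (simp add: trace_2 det_2 power2_eq_square algebra_simps)
  have q1: "((?a - l) * (?d - l) - ?b * ?c) * v$1 = 0"
  proof -
    have "((?a - l) * (?d - l) - ?b * ?c) * v$1 = (?d - l) * (?a * v$1 + ?b * v$2 - l * v$1) - ?b * (?c * v$1 + ?d * v$2 - l * v$2)"
      by (simp add: algebra_simps)
    then show ?thesis using e1 e2 by simp
  qed
  have q2: "((?a - l) * (?d - l) - ?b * ?c) * v$2 = 0"
  proof -
    have "((?a - l) * (?d - l) - ?b * ?c) * v$2 = (?a - l) * (?c * v$1 + ?d * v$2 - l * v$2) - ?c * (?a * v$1 + ?b * v$2 - l * v$1)"
      by (simp add: algebra_simps)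
    then show ?thesis using e1 e2 by simp
  qed
  have "v$1 \<noteq> 0 \<or> v$2 \<noteq> 0" using v(1) vec2_eq[of v 0] by auto
  then show ?thesis using q q1 q2 by auto
qed

lemma root_eig:
  fixes A :: "real^2^2"
  assumes "l^2 - of_real (trace A) * l + of_real (det A) = 0"
  shows "is_eigenvalue_C A l"
proof -
  let ?a = "complex_of_real (A$1$1)" and ?b = "complex_of_real (A$1$2)"
  let ?c = "complex_of_real (A$2$1)" and ?d = "complex_of_real (A$2$2)"
  have q: "(?a - l) * (?d - l) - ?b * ?c = 0" using assms
    by (simp add: trace_2 det_2 power2_eq_square algebra_simps)
  have ex: "\<exists>x y. (x \<noteq> 0 \<or> y \<noteq> 0) \<and> ?a * x + ?b * y = l * x \<and> ?c * x + ?d * y = l * y"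
  proof (cases "A$1$2 = 0")
    case False
    then show ?thesis
      by (intro exI[of _ ?b] exI[of _ "l - ?a"]) (use q in \<open>auto simp: algebra_simps\<close>)
  next
    case b0: True
    show ?thesis
    proof (cases "A$2$1 = 0")
      case False
      then show ?thesis
        by (intro exI[of _ "l - ?d"] exI[of _ ?c]) (use q in \<open>auto simp: algebra_simps\<close>)
    next
      case True
      then have "l = ?a \<or> l = ?d" using q b0 by auto
      then show ?thesis
      proof
        assume "l = ?a" then show ?thesis using b0 True
          by (intro exI[of _ 1] exI[of _ 0]) auto
      next
        assume "l = ?d" then show ?thesis using b0 True
          by (intro exI[of _ 0] exI[of _ 1]) auto
      qed
    qed
  qed
  then obtain x y where xy: "x \<noteq> 0 \<or> y \<noteq> 0" "?a * x + ?b * y = l * x" "?c * x + ?d * y = l * y" by blast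
  let ?v = "(\<chi> i. if i = 1 then x else y) :: complex^2"
  have "?v \<noteq> 0" using xy(1) vec2_eq[of ?v 0] by auto
  moreover have "cmat A *v ?v = l *s ?v"
    unfolding vec2_eq cmat_mv using xy by simp
  ultimately show ?thesis unfolding is_eigenvalue_C_def by blast
qed

lemma root_eig_real:
  fixes A :: "real^2^2"
  assumes "r^2 - trace A * r + det A = 0"
  shows "\<exists>v::real^2. v \<noteq> 0 \<and> A *v v = r *s v"
proof -
  let ?a = "A$1$1" and ?b = "A$1$2"
  let ?c = "A$2$1" and ?d = "A$2$2"
  have q: "(?a - r) * (?d - r) - ?b * ?c = 0" using assms
    by (simp add: trace_2 det_2 power2_eq_square algebra_simps)
  have ex: "\<exists>x y. (x \<noteq> 0 \<or> y \<noteq> 0) \<and> ?a * x + ?b * y = r * x \<and> ?c * x + ?d * y = r * y"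
  proof (cases "A$1$2 = 0")
    case False
    then show ?thesis
      by (intro exI[of _ ?b] exI[of _ "r - ?a"]) (use q in \<open>auto simp: algebra_simps\<close>)
  next
    case b0: True
    show ?thesis
    proof (cases "A$2$1 = 0")
      case False
      then show ?thesis
        by (intro exI[of _ "r - ?d"] exI[of _ ?c]) (use q in \<open>auto simp: algebra_simps\<close>)
    next
      case True
      then have "r = ?a \<or> r = ?d" using q b0 by auto
      then show ?thesis
      proof
        assume "r = ?a" then show ?thesis using b0 True
          by (intro exI[of _ 1] exI[of _ 0]) auto
      next
        assume "r = ?d" then show ?thesis using b0 True
          by (intro exI[of _ 0] exI[of _ 1]) auto
      qed
    qed
  qed
  then obtain x y where xy: "x \<noteq> 0 \<or> y \<noteq> 0" "?a * x + ?b * y = r * x" "?c * x + ?d * y = r * y" by blast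
  let ?v = "(\<chi> i. if i = 1 then x else y) :: real^2"
  have "?v \<noteq> 0" using xy(1) vec2_eq[of ?v 0] by auto
  moreover have "A *v ?v = r *s ?v"
    unfolding vec2_eq rmat_mv using xy by simp
  ultimately show ?thesis by blast
qed


lemma cone_of:
  fixes a b c d :: real
  assumes h1: "a + \<bar>b\<bar> \<le> 0" and h2: "d + \<bar>c\<bar> \<le> 0"
    and q: "l^2 - of_real (a+d) * l + of_real (a*d - b*c) = 0"
  shows "in_cone l"
proof -
  define x where "x = Re l"
  define y where "y = Im l"
  have re: "x*x - y*y - (a+d)*x + (a*d - b*c) = 0"
    using arg_cong[OF q, of Re] by (simp add: x_def y_def power2_eq_square)
  have im: "2*x*y - (a+d)*y = 0"
    using arg_cong[OF q, of Im] by (simp add: x_def y_def power2_eq_square algebra_simps)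
  have bc: "\<bar>b\<bar> * \<bar>c\<bar> \<le> a * d"
  proof -
    have "\<bar>b\<bar> * \<bar>c\<bar> \<le> (-a) * (-d)" using h1 h2 by (intro mult_mono) auto
    then show ?thesis by simp
  qed
  have bc2: "b*c \<ge> - (\<bar>b\<bar> * \<bar>c\<bar>)" by (simp add: abs_mult[symmetric])
  have bc3: "b*c \<le> \<bar>b\<bar> * \<bar>c\<bar>" by (simp add: abs_mult[symmetric])
  have D0: "a*d - b*c \<ge> 0" using bc bc3 by linarith
  have a0: "a \<le> 0" "d \<le> 0" using h1 h2 by auto
  show ?thesis
  proof (cases "y = 0")
    case True
    have "x \<le> 0"
    proof (rule ccontr)
      assume "\<not> x \<le> 0"
      then have h: "x*x > 0" "(a+d)*x \<le> 0" using a0 by (auto simp: mult_nonpos_nonneg)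
      have "x*x - (a+d)*x + (a*d - b*c) = 0" using re True by simp
      then show False using h D0 by linarith
    qed
    then show ?thesis unfolding in_cone_def using True by (simp add: x_def y_def)
  next
    case False
    then have x: "2*x = a+d" using im by (metis mult.commute mult_right_cancel right_diff_distrib' eq_iff_diff_eq_0 mult.assoc)
    have "y*y = x*x - (a+d)*x + (a*d - b*c)" using re by linarith
    also have "\<dots> \<le> x*x" 
    proof -
      have "(a - d)*(a-d) \<ge> 0" by simp
      then have "2*(a*d) \<le> (a+d)*(a+d)/2" by (simp add: algebra_simps)
      moreover have "(a+d)*x = (a+d)*(a+d)/2" using x by (simp add: field_simps)
      ultimately show ?thesis using bc bc2 by linarith
    qed
    finally have "y*y \<le> x*x" .
    then have "\<bar>y\<bar> \<le> \<bar>x\<bar>" by (metis abs_le_square_iff power2_eq_square)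
    moreover have "x \<le> 0" using x a0 by linarith
    ultimately show ?thesis unfolding in_cone_def by (simp add: x_def y_def)
  qed
qed

lemma cmat_mult: "cmat ((X::real^'n^'m) ** (Y::real^'k^'n)) = cmat X ** cmat Y"
  by (simp add: cmat_def matrix_matrix_mult_def vec_eq_iff)

lemma cmat_zero_iff: "cmat (X::real^'n^'m) = 0 \<longleftrightarrow> X = 0"
  by (simp add: cmat_def vec_eq_iff)

lemma nilp:
  fixes A :: "real^2^2"
  assumes "diagonalizable_C A" "A ** A = 0"
  shows "A = 0"
proof -
  obtain P :: "complex^2^2" where P: "invertible P"
    and off: "\<And>i j. i \<noteq> j \<Longrightarrow> (matrix_inv P ** cmat A ** P)$i$j = 0"
    using assms(1) diagonalizable_C_def by blast
  define M where "M = matrix_inv P ** cmat A ** P"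
  have l: "P ** matrix_inv P = mat 1" "matrix_inv P ** P = mat 1" using inv_lr[OF P] by auto
  have "M ** M = matrix_inv P ** (cmat A ** (P ** matrix_inv P) ** cmat A) ** P"
    unfolding M_def by (simp add: matrix_mul_assoc)
  also have "\<dots> = matrix_inv P ** cmat (A ** A) ** P" by (simp add: l cmat_mult)
  also have "\<dots> = 0" using assms(2) cmat_zero_iff[of "0::real^2^2"] by simp
  finally have MM: "M ** M = 0" .
  have offM: "M$1$2 = 0" "M$2$1 = 0" using off M_def by auto
  have "(M ** M)$1$1 = M$1$1 * M$1$1" "(M ** M)$2$2 = M$2$2 * M$2$2"
    using offM by (simp_all add: matrix_matrix_mult_def sum_2)
  then have "M$1$1 = 0" "M$2$2 = 0" using MM by auto
  then have M0: "M = 0" using offM by (simp add: vec2_eq)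
  have "P ** M ** matrix_inv P = (P ** matrix_inv P) ** cmat A ** (P ** matrix_inv P)"
    unfolding M_def by (simp add: matrix_mul_assoc)
  then have "cmat A = P ** M ** matrix_inv P" by (simp add: l)
  then have "cmat A = 0" using M0 by simp
  then show ?thesis using cmat_zero_iff by blast
qed


definition m2 :: "real \<Rightarrow> real \<Rightarrow> real \<Rightarrow> real \<Rightarrow> real^2^2" where
  "m2 p q r s = (\<chi> i j. if i = 1 then (if j = 1 then p else q) else (if j = 1 then r else s))"

lemma m2_simps[simp]: "m2 p q r s $1$1 = p" "m2 p q r s $1$2 = q" "m2 p q r s $2$1 = r" "m2 p q r s $2$2 = s"
  by (simp_all add: m2_def)

lemma mult_2: "((X::'a::semiring_1^2^2) ** Y)$i$j = X$i$1*Y$1$j + X$i$2*Y$2$j"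
  by (simp add: matrix_matrix_mult_def sum_2)

lemma mat2_eq: "(X::'a^2^2) = Y \<longleftrightarrow> X$1$1 = Y$1$1 \<and> X$1$2 = Y$1$2 \<and> X$2$1 = Y$2$1 \<and> X$2$2 = Y$2$2"
  by (auto simp: vec2_eq[of X Y] vec2_eq[of "X$1"] vec2_eq[of "X$2"])

lemma mu_m2: "mu p (m2 x y z w) \<le> 0 \<longleftrightarrow> x + \<bar>y\<bar> \<le> 0 \<and> w + \<bar>z\<bar> \<le> 0 \<and> x + \<bar>z\<bar> \<le> 0 \<and> w + \<bar>y\<bar> \<le> 0 \<or>
   (p = P1 \<and> x + \<bar>z\<bar> \<le> 0 \<and> w + \<bar>y\<bar> \<le> 0) \<or> (p = PInf \<and> x + \<bar>y\<bar> \<le> 0 \<and> w + \<bar>z\<bar> \<le> 0)"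
  by (cases p) (auto simp: mu_def mu1_2 muinf_2)

lemma nil_sq:
  fixes A :: "real^2^2"
  assumes "trace A = 0" "det A = 0"
  shows "A ** A = 0"
proof -
  have d: "A$2$2 = - A$1$1" using assms(1) by (simp add: trace_2)
  have bc: "A$1$2 * A$2$1 = - (A$1$1 * A$1$1)" using assms(2) d by (simp add: det_2)
  show ?thesis unfolding mat2_eq mult_2 using d bc by (simp add: algebra_simps)
qed

lemma compose:
  fixes A P J Q K :: "real^2^2"
  assumes "invertible P" "A ** P = P ** J" "invertible Q" "J ** Q = Q ** K" "mu p K \<le> 0"
  shows "\<exists>W :: real^2^2. invertible W \<and> mu p (W ** A ** matrix_inv W) \<le> 0"
proof (rule sim_exists)
  show "invertible (P ** Q)" using assms invertible_mult by blast
  show "A ** (P ** Q) = (P ** Q) ** K" using assms(2,4) by (metis matrix_mul_assoc)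
qed fact


lemma mu_m2_le: "x + \<bar>y\<bar> \<le> 0 \<Longrightarrow> w + \<bar>z\<bar> \<le> 0 \<Longrightarrow> x + \<bar>z\<bar> \<le> 0 \<Longrightarrow> w + \<bar>y\<bar> \<le> 0 \<Longrightarrow> mu p (m2 x y z w) \<le> 0"
  by (cases p) (auto simp: mu_def mu1_2 muinf_2)

lemma fwd:
  fixes A W :: "real^2^2"
  assumes W: "invertible W" and m: "mu p (W ** A ** matrix_inv W) \<le> 0" and l: "is_eigenvalue_C A l"
  shows "in_cone l"
proof -
  define B where "B = W ** A ** matrix_inv W"
  have q: "l^2 - of_real (trace B) * l + of_real (det B) = 0"
    using eig_char[OF l] trace_sim[OF W, of A] by (simp add: B_def)
  show ?thesis
  proof (cases p)
    case P1
    then have "B$1$1 + \<bar>B$2$1\<bar> \<le> 0" "B$2$2 + \<bar>B$1$2\<bar> \<le> 0" using m by (auto simp: B_def mu_def mu1_2)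
    moreover have "l^2 - of_real (B$1$1 + B$2$2) * l + of_real (B$1$1 * B$2$2 - B$2$1 * B$1$2) = 0"
      using q by (simp add: trace_2 det_2 mult.commute)
    ultimately show ?thesis by (rule cone_of)
  next
    case PInf
    then have "B$1$1 + \<bar>B$1$2\<bar> \<le> 0" "B$2$2 + \<bar>B$2$1\<bar> \<le> 0" using m by (auto simp: B_def mu_def muinf_2)
    moreover have "l^2 - of_real (B$1$1 + B$2$2) * l + of_real (B$1$1 * B$2$2 - B$1$2 * B$2$1) = 0"
      using q by (simp add: trace_2 det_2)
    ultimately show ?thesis by (rule cone_of)
  qed
qed

lemma bwd:
  fixes A :: "real^2^2"
  assumes diag: "diagonalizable_C A" and H: "\<forall>l. is_eigenvalue_C A l \<longrightarrow> in_cone l"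
  shows "\<exists>W :: real^2^2. invertible W \<and> mu p (W ** A ** matrix_inv W) \<le> 0"
proof -
  define a where "a = A$1$1"
  define b where "b = A$1$2"
  define c where "c = A$2$1"
  define d where "d = A$2$2"
  define t where "t = trace A"
  define D where "D = det A"
  define \<Delta> where "\<Delta> = t^2 - 4*D"
  have tD: "t = a + d" "D = a*d - b*c" unfolding t_def D_def a_def b_def c_def d_def by (simp_all add: trace_2 det_2)
  show ?thesis
  proof (cases "\<Delta> < 0")
    case True
    define \<beta> where "\<beta> = sqrt (-\<Delta>) / 2"
    define \<alpha> where "\<alpha> = t/2"
    define h where "h = (a - d)/2"
    have bpos: "\<beta> > 0" using True unfolding \<beta>_def by simp
    have b2: "\<beta>*\<beta> = -\<Delta>/4" using True unfolding \<beta>_def by (simp add: field_simps flip: power2_eq_square)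
    have "is_eigenvalue_C A (Complex \<alpha> \<beta>)"
    proof (rule root_eig)
      show "(Complex \<alpha> \<beta>)^2 - of_real (trace A) * Complex \<alpha> \<beta> + of_real (det A) = 0"
        unfolding complex_eq_iff using b2 by (simp add: power2_eq_square \<alpha>_def \<Delta>_def t_def[symmetric] D_def[symmetric] field_simps)
    qed
    then have cone: "\<alpha> \<le> 0" "\<beta> \<le> - \<alpha>" using H unfolding in_cone_def by auto
    have c0: "c \<noteq> 0"
    proof
      assume "c = 0"
      then have "\<Delta> = (a - d)^2" using tD unfolding \<Delta>_def by (simp add: power2_eq_square algebra_simps)
      then show False using True by simp
    qed
    define P where "P = m2 \<beta> (-h) 0 (-c)"
    define J where "J = m2 \<alpha> \<beta> (-\<beta>) \<alpha>"
    have "invertible P" unfolding invertible_det_nz P_def det_2 using bpos c0 by simp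
    moreover have "A ** P = P ** J"
      unfolding mat2_eq mult_2 P_def J_def
      using b2 tD unfolding a_def[symmetric] b_def[symmetric] c_def[symmetric] d_def[symmetric] \<Delta>_def h_def \<alpha>_def
      by (simp add: field_simps power2_eq_square)
    moreover have "mu p J \<le> 0" unfolding J_def using cone bpos by (intro mu_m2_le) auto
    ultimately show ?thesis by (rule sim_exists)
  next
    case False
    define r1 where "r1 = (t + sqrt \<Delta>)/2"
    define r2 where "r2 = (t - sqrt \<Delta>)/2"
    have sq: "sqrt \<Delta> * sqrt \<Delta> = \<Delta>" using False by simp
    have root1: "r1^2 - t * r1 + D = 0" unfolding r1_def using sq
      by (simp add: power2_eq_square field_simps \<Delta>_def)
    have root2: "r2^2 - t * r2 + D = 0" unfolding r2_def using sq
      by (simp add: power2_eq_square field_simps \<Delta>_def)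
    have r12: "r1 + r2 = t" "r1 * r2 = D" unfolding r1_def r2_def using sq
      by (simp_all add: field_simps \<Delta>_def power2_eq_square)
    have rle: "r1 \<le> 0" "r2 \<le> 0"
    proof -
      have "is_eigenvalue_C A (of_real r1)"
        by (rule root_eig) (metis root1 t_def D_def of_real_0 of_real_add of_real_diff of_real_mult of_real_power)
      then show "r1 \<le> 0" using H unfolding in_cone_def by auto
      have "is_eigenvalue_C A (of_real r2)"
        by (rule root_eig) (metis root2 t_def D_def of_real_0 of_real_add of_real_diff of_real_mult of_real_power)
      then show "r2 \<le> 0" using H unfolding in_cone_def by auto
    qed
    obtain v :: "real^2" where v: "v \<noteq> 0" "A *v v = r1 *s v"
      using root_eig_real[of r1 A] root1 t_def D_def by auto
    have v12: "v$1 \<noteq> 0 \<or> v$2 \<noteq> 0" using v(1) vec2_eq[of v 0] by auto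
    have ev: "a * v$1 + b * v$2 = r1 * v$1" "c * v$1 + d * v$2 = r1 * v$2"
      using v(2) rmat_mv[of A v] unfolding vec2_eq a_def b_def c_def d_def by auto
    define P where "P = m2 (v$1) (-v$2) (v$2) (v$1)"
    have nz: "v$1 * v$1 + v$2 * v$2 \<noteq> 0" using v12
      by (simp add: sum_squares_eq_zero_iff)
    have Pinv: "invertible P" unfolding invertible_det_nz P_def det_2 using nz by simp
    define J where "J = matrix_inv P ** A ** P"
    have l: "P ** matrix_inv P = mat 1" "matrix_inv P ** P = mat 1" using inv_lr[OF Pinv] by auto
    have AP: "A ** P = P ** J"
    proof -
      have "P ** J = (P ** matrix_inv P) ** A ** P" unfolding J_def by (simp add: matrix_mul_assoc)
      then show ?thesis by (simp add: l)
    qed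
    have trJ: "trace J = t" unfolding J_def t_def
    proof -
      have "trace (matrix_inv P ** A ** P) = trace (P ** (matrix_inv P ** A))" by (rule trace_mul_sym)
      also have "P ** (matrix_inv P ** A) = (P ** matrix_inv P) ** A" by (simp add: matrix_mul_assoc)
      finally show "trace (matrix_inv P ** A ** P) = trace A" by (simp add: l)
    qed
    have col: "v$1 * J$1$1 - v$2 * J$2$1 = r1 * v$1" "v$2 * J$1$1 + v$1 * J$2$1 = r1 * v$2"
    proof -
      have "(A ** P)$1$1 = (P ** J)$1$1" "(A ** P)$2$1 = (P ** J)$2$1" using AP by auto
      then show "v$1 * J$1$1 - v$2 * J$2$1 = r1 * v$1" "v$2 * J$1$1 + v$1 * J$2$1 = r1 * v$2"
        using ev unfolding mult_2 P_def a_def b_def c_def d_def by (simp_all add: algebra_simps)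
    qed
    have J11: "J$1$1 = r1"
    proof -
      have e1: "(J$1$1 - r1) * v$1 = v$2 * J$2$1" using col(1) by (simp add: algebra_simps)
      have e2: "(J$1$1 - r1) * v$2 = - (v$1 * J$2$1)" using col(2) by (simp add: algebra_simps)
      have "(J$1$1 - r1) * (v$1 * v$1 + v$2 * v$2) = ((J$1$1 - r1) * v$1) * v$1 + ((J$1$1 - r1) * v$2) * v$2"
        by (simp add: algebra_simps)
      also have "\<dots> = 0" unfolding e1 e2 by (simp add: algebra_simps)
      finally have "(J$1$1 - r1) * (v$1 * v$1 + v$2 * v$2) = 0" .
      then show ?thesis using nz by auto
    qed
    have J21: "J$2$1 = 0"
    proof -
      have "J$2$1 * v$2 = 0" "J$2$1 * v$1 = 0" using col J11 by (simp_all add: algebra_simps)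
      then show ?thesis using v12 by auto
    qed
    have J22: "J$2$2 = r2" using trJ J11 r12 by (simp add: trace_2)
    define s where "s = J$1$2"
    have Jm: "J = m2 r1 s 0 r2" unfolding mat2_eq using J11 J21 J22 s_def by simp
    show ?thesis
    proof (cases "s = 0")
      case True
      show ?thesis
        by (rule sim_exists[OF Pinv AP]) (use rle True in \<open>simp add: Jm mu_m2_le\<close>)
    next
      case s0: False
      show ?thesis
      proof (cases "r1 = r2")
        case False
        show ?thesis
        proof (rule compose[OF Pinv AP])
          show "invertible (m2 1 s 0 (r2 - r1))" unfolding invertible_det_nz det_2 using False by simp
          show "J ** m2 1 s 0 (r2 - r1) = m2 1 s 0 (r2 - r1) ** m2 r1 0 0 r2"
            unfolding Jm mat2_eq mult_2 by (simp add: algebra_simps)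
          show "mu p (m2 r1 0 0 r2) \<le> 0" using rle by (simp add: mu_m2_le)
        qed
      next
        case eq: True
        show ?thesis
        proof (cases "r1 = 0")
          case False
          then have r1n: "r1 < 0" using rle by simp
          define e where "e = - r1 / \<bar>s\<bar>"
          have epos: "e > 0" using r1n s0 unfolding e_def by (simp add: divide_neg_pos)
          have se: "\<bar>s * e\<bar> = - r1" using s0 epos r1n unfolding e_def by (simp add: abs_mult)
          show ?thesis
          proof (rule compose[OF Pinv AP])
            show "invertible (m2 1 0 0 e)" unfolding invertible_det_nz det_2 using epos by simp
            show "J ** m2 1 0 0 e = m2 1 0 0 e ** m2 r1 (s*e) 0 r1"
              unfolding Jm mat2_eq mult_2 using eq by (simp add: algebra_simps)
            show "mu p (m2 r1 (s*e) 0 r1) \<le> 0" using se r1n by (intro mu_m2_le) auto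
          qed
        next
          case True
          then have "trace A = 0" "det A = 0" using eq r12 t_def D_def by auto
          then have "A ** A = 0" by (rule nil_sq)
          then have "A = 0" using nilp[OF diag] by blast
          then have "J = 0" unfolding J_def by simp
          then have "s = 0" using s_def by simp
          then show ?thesis using s0 by simp
        qed
      qed
    qed
  qed
qed

theorem mainTheorem3:
  fixes A :: "real^2^2" and p :: pnorm
  assumes "diagonalizable_C A"
  shows "(\<exists>W :: real^2^2. invertible W \<and> mu p (W ** A ** matrix_inv W) \<le> 0)
         \<longleftrightarrow> (\<forall>l. is_eigenvalue_C A l \<longrightarrow> in_cone l)"
  using fwd bwd[OF assms] by blast

end
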